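(* Let $\mathbf G$ be a power-associative loop such that $\lvert\mathrm{Cen}(\mathcal G(\mathbf G))\rvert>1$. Then: (a) either $\mathbf G\cong(\mathbb Z,+)$, or all elements of $\mathbf G$ have finite order; (b) $\mathbf G\cong(\mathbb Z,+)$ if and only if $G$ is the union of countably infinitely many $\equiv_{\mathbf G}$-classes of cardinality $2$ and exactly one $\equiv_{\mathbf G}$-class of cardinality $3$.
   Context: A loop is called power-associative if every subloop generated by one element is a group; for such a loop, $x^n$ ($n\in\mathbb Z$) and the order $o(x)$ are defined within the cyclic group $\langle x\rangle$, and $e_{\mathbf G}$ denotes the identity. The power graph $\mathcal G(\mathbf G)$ is the simple graph with vertex set $G$ in which distinct $x,y$ are adjacent if $y=x^n$ or $x=y^n$ for some $n\in\mathbb Z$. The center of the power graph is $\mathrm{Cen}(\mathcal G(\mathbf G))=\{x\in G\mid x\text{ is adjacent to every }y\in G\setminus\{x\}\}$. For vertices $x,y$, write $x\equiv_{\mathbf G}y$ if $x$ and $y$ have the same closed neighborhood in $\mathcal G(\mathbf G)$. *)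

theory Defs
  imports "HOL-Library.Countable_Set"
begin

definition loop :: "'a set \<Rightarrow> ('a \<Rightarrow> 'a \<Rightarrow> 'a) \<Rightarrow> 'a \<Rightarrow> bool" where
  "loop G mult e \<longleftrightarrow>
     e \<in> G \<and> (\<forall>a\<in>G. \<forall>b\<in>G. mult a b \<in> G) \<and>
     (\<forall>a\<in>G. mult e a = a \<and> mult a e = a) \<and>
     (\<forall>a\<in>G. \<forall>b\<in>G. \<exists>!x. x \<in> G \<and> mult a x = b) \<and>
     (\<forall>a\<in>G. \<forall>b\<in>G. \<exists>!y. y \<in> G \<and> mult y a = b)"

definition ldiv :: "'a set \<Rightarrow> ('a \<Rightarrow> 'a \<Rightarrow> 'a) \<Rightarrow> 'a \<Rightarrow> 'a \<Rightarrow> 'a" where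
  "ldiv G mult a b = (THE x. x \<in> G \<and> mult a x = b)"

definition rdiv :: "'a set \<Rightarrow> ('a \<Rightarrow> 'a \<Rightarrow> 'a) \<Rightarrow> 'a \<Rightarrow> 'a \<Rightarrow> 'a" where
  "rdiv G mult b a = (THE y. y \<in> G \<and> mult y a = b)"

inductive_set subloop_gen :: "'a set \<Rightarrow> ('a \<Rightarrow> 'a \<Rightarrow> 'a) \<Rightarrow> 'a \<Rightarrow> 'a \<Rightarrow> 'a set"
  for G mult e x where
  gen: "x \<in> subloop_gen G mult e x"
| unit: "e \<in> subloop_gen G mult e x"
| mult: "a \<in> subloop_gen G mult e x \<Longrightarrow> b \<in> subloop_gen G mult e x \<Longrightarrow> mult a b \<in> subloop_gen G mult e x"
| ldiv: "a \<in> subloop_gen G mult e x \<Longrightarrow> b \<in> subloop_gen G mult e x \<Longrightarrow> ldiv G mult a b \<in> subloop_gen G mult e x"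
| rdiv: "a \<in> subloop_gen G mult e x \<Longrightarrow> b \<in> subloop_gen G mult e x \<Longrightarrow> rdiv G mult a b \<in> subloop_gen G mult e x"

text \<open>Power-associative: every one-generated subloop is a group (i.e. associative,
 as it is already a loop).\<close>
definition power_assoc_loop :: "'a set \<Rightarrow> ('a \<Rightarrow> 'a \<Rightarrow> 'a) \<Rightarrow> 'a \<Rightarrow> bool" where
  "power_assoc_loop G mult e \<longleftrightarrow> loop G mult e \<and>
     (\<forall>x\<in>G. \<forall>a\<in>subloop_gen G mult e x. \<forall>b\<in>subloop_gen G mult e x. \<forall>c\<in>subloop_gen G mult e x.
        mult (mult a b) c = mult a (mult b c))"

fun npow :: "('a \<Rightarrow> 'a \<Rightarrow> 'a) \<Rightarrow> 'a \<Rightarrow> 'a \<Rightarrow> nat \<Rightarrow> 'a" where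
  "npow mult e x 0 = e"
| "npow mult e x (Suc n) = mult x (npow mult e x n)"

definition zpow :: "'a set \<Rightarrow> ('a \<Rightarrow> 'a \<Rightarrow> 'a) \<Rightarrow> 'a \<Rightarrow> 'a \<Rightarrow> int \<Rightarrow> 'a" where
  "zpow G mult e x n = (if 0 \<le> n then npow mult e x (nat n)
                        else ldiv G mult (npow mult e x (nat (- n))) e)"

definition finite_order :: "('a \<Rightarrow> 'a \<Rightarrow> 'a) \<Rightarrow> 'a \<Rightarrow> 'a \<Rightarrow> bool" where
  "finite_order mult e x \<longleftrightarrow> (\<exists>n::nat. n > 0 \<and> npow mult e x n = e)"

definition pg_adj :: "'a set \<Rightarrow> ('a \<Rightarrow> 'a \<Rightarrow> 'a) \<Rightarrow> 'a \<Rightarrow> 'a \<Rightarrow> 'a \<Rightarrow> bool" where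
  "pg_adj G mult e x y \<longleftrightarrow> x \<in> G \<and> y \<in> G \<and> x \<noteq> y \<and>
     (\<exists>n::int. y = zpow G mult e x n \<or> x = zpow G mult e y n)"

definition pg_center :: "'a set \<Rightarrow> ('a \<Rightarrow> 'a \<Rightarrow> 'a) \<Rightarrow> 'a \<Rightarrow> 'a set" where
  "pg_center G mult e = {x \<in> G. \<forall>y \<in> G - {x}. pg_adj G mult e x y}"

definition closed_nbhd :: "'a set \<Rightarrow> ('a \<Rightarrow> 'a \<Rightarrow> 'a) \<Rightarrow> 'a \<Rightarrow> 'a \<Rightarrow> 'a set" where
  "closed_nbhd G mult e x = insert x {y \<in> G. pg_adj G mult e x y}"

definition nbhd_class :: "'a set \<Rightarrow> ('a \<Rightarrow> 'a \<Rightarrow> 'a) \<Rightarrow> 'a \<Rightarrow> 'a \<Rightarrow> 'a set" where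
  "nbhd_class G mult e x = {y \<in> G. closed_nbhd G mult e y = closed_nbhd G mult e x}"

definition nbhd_classes :: "'a set \<Rightarrow> ('a \<Rightarrow> 'a \<Rightarrow> 'a) \<Rightarrow> 'a \<Rightarrow> 'a set set" where
  "nbhd_classes G mult e = nbhd_class G mult e ` G"

definition iso_to_int :: "'a set \<Rightarrow> ('a \<Rightarrow> 'a \<Rightarrow> 'a) \<Rightarrow> bool" where
  "iso_to_int G mult \<longleftrightarrow> (\<exists>f. bij_betw f G (UNIV :: int set) \<and>
      (\<forall>a\<in>G. \<forall>b\<in>G. f (mult a b) = f a + f b))"

end

theory Submission
  imports Defs "HOL-Algebra.Multiplicative_Group" "HOL-Number_Theory.Cong"
begin



definition Dv :: "int \<Rightarrow> int set" where "Dv u = {v. u dvd v \<or> v dvd u}"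

lemma arith1: assumes "(m::int) \<ge> 2" shows "m + 1 \<noteq> m*k"
proof
  assume h: "m + 1 = m*k"
  show False
  proof (cases "k \<le> 1")
    case True then have "m*k \<le> m*1" using assms by (intro mult_left_mono) auto
    then show False using h by simp
  next
    case False then have "m*k \<ge> m*2" using assms by (intro mult_left_mono) auto
    then show False using h assms by linarith
  qed
qed

lemma arith2: assumes "(m::int) \<ge> 2" shows "m \<noteq> (m+1)*k"
proof
  assume h: "m = (m+1)*k"
  show False
  proof (cases "k \<le> 0")
    case True then have "(m+1)*k \<le> (m+1)*0" using assms by (intro mult_left_mono) auto
    then show False using h assms by simp
  next
    case False then have "(m+1)*k \<ge> (m+1)*1" using assms by (intro mult_left_mono) auto
    then show False using h assms by simp
  qed
qed

lemma arith3: assumes "\<bar>n::int\<bar> \<ge> 2" shows "n + sgn n \<noteq> n*k" "n \<noteq> (n + sgn n)*k"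
proof -
  have "n + sgn n \<noteq> n*k \<and> n \<noteq> (n + sgn n)*k"
  proof (cases "n \<ge> 0")
    case True then have "n \<ge> 2" "sgn n = 1" using assms by auto
    then show ?thesis using arith1 arith2 by auto
  next
    case False then have m: "-n \<ge> 2" "sgn n = -1" using assms by auto
    have "-n + 1 \<noteq> (-n)*k" "-n \<noteq> (-n+1)*k" using arith1[OF m(1)] arith2[OF m(1)] by auto
    then show ?thesis using m(2) by (auto simp: algebra_simps)
  qed
  then show "n + sgn n \<noteq> n*k" "n \<noteq> (n + sgn n)*k" by auto
qed

lemma D_univ: "\<bar>u\<bar> \<le> 1 \<Longrightarrow> Dv u = UNIV"
proof -
  assume "\<bar>u\<bar> \<le> 1"
  then have "u = 0 \<or> u = 1 \<or> u = -1" by auto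
  then show ?thesis unfolding Dv_def by auto
qed

lemma D_not_univ: assumes "\<bar>u\<bar> \<ge> 2" shows "Dv u \<noteq> UNIV"
proof
  assume "Dv u = UNIV"
  then have "2*u+1 \<in> Dv u" by simp
  then have "u dvd 2*u+1 \<or> 2*u+1 dvd u" unfolding Dv_def by simp
  then show False
  proof
    assume "u dvd 2*u+1" then have "u dvd 1" by (simp add: dvd_add_right_iff)
    then show False using assms by auto
  next
    assume "2*u+1 dvd u" 
    then have "\<bar>2*u+1\<bar> \<le> \<bar>u\<bar>" using assms by (intro dvd_imp_le_int) auto
    then show False using assms by auto
  qed
qed

lemma D_neg: "Dv (-u) = Dv u" unfolding Dv_def by auto

lemma D_inj_aux: assumes "\<bar>u\<bar> \<ge> 2" "\<bar>v\<bar> \<ge> 2" "Dv u = Dv v" "u dvd v" shows "\<bar>u\<bar> = \<bar>v\<bar>"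
proof (rule ccontr)
  assume ne: "\<bar>u\<bar> \<noteq> \<bar>v\<bar>"
  obtain k where k: "v = u*k" using assms(4) by blast
  have u0: "u \<noteq> 0" using assms by auto
  have k0: "k \<noteq> 0" using k assms by auto
  have k1: "\<bar>k\<bar> \<noteq> 1"
  proof
    assume "\<bar>k\<bar> = 1" then have "\<bar>v\<bar> = \<bar>u\<bar>" using k by (simp add: abs_mult)
    then show False using ne by simp
  qed
  have "u*(2*k+1) \<in> Dv u" unfolding Dv_def by simp
  then have "v dvd u*(2*k+1) \<or> u*(2*k+1) dvd v" using assms(3) unfolding Dv_def by simp
  then show False
  proof
    assume "v dvd u*(2*k+1)"
    then have "u*k dvd u*(2*k+1)" using k by blast
    then have "k dvd 2*k+1" using dvd_times_left_cancel_iff[OF u0] by blast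
    then have "k dvd 1" by (simp add: dvd_add_right_iff)
    then show False using k1 by simp
  next
    assume "u*(2*k+1) dvd v"
    then have "u*(2*k+1) dvd u*k" using k by blast
    then have "2*k+1 dvd k" using dvd_times_left_cancel_iff[OF u0] by blast
    then have "\<bar>2*k+1\<bar> \<le> \<bar>k\<bar>" using k0 by (intro dvd_imp_le_int) auto
    then show False using k0 k1 by arith
  qed
qed

lemma D_inj: assumes "\<bar>u\<bar> \<ge> 2" "\<bar>v\<bar> \<ge> 2" "Dv u = Dv v" shows "\<bar>u\<bar> = \<bar>v\<bar>"
proof -
  have "u \<in> Dv u" unfolding Dv_def by simp
  then have "u \<in> Dv v" using assms(3) by simp
  then have "v dvd u \<or> u dvd v" unfolding Dv_def by simp
  then show ?thesis
  proof
    assume "v dvd u" then show ?thesis using D_inj_aux[of v u] assms by simp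
  next
    assume "u dvd v" then show ?thesis using D_inj_aux[of u v] assms by simp
  qed
qed

definition Kc where "Kc u = {v. Dv v = Dv u}"

lemma K_small: "\<bar>u\<bar> \<le> 1 \<Longrightarrow> Kc u = {-1,0,1}"
proof -
  assume u: "\<bar>u\<bar> \<le> 1"
  have "Dv v = Dv u \<longleftrightarrow> \<bar>v\<bar> \<le> 1" for v
  proof
    assume "Dv v = Dv u"
    then have "Dv v = UNIV" using D_univ u by simp
    show "\<bar>v\<bar> \<le> 1"
    proof (rule ccontr)
      assume "\<not> \<bar>v\<bar> \<le> 1" then have "\<bar>v\<bar> \<ge> 2" by simp
      then show False using D_not_univ \<open>Dv v = UNIV\<close> by blast
    qed
  next
    assume "\<bar>v\<bar> \<le> 1" then show "Dv v = Dv u" using D_univ u by simp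
  qed
  moreover have "\<bar>v\<bar> \<le> 1 \<longleftrightarrow> v = -1 \<or> v = 0 \<or> v = 1" for v :: int by arith
  ultimately show ?thesis unfolding Kc_def by blast
qed

lemma K_big: assumes u: "\<bar>u\<bar> \<ge> 2" shows "Kc u = {u, -u}"
proof -
  have "Dv v = Dv u \<longleftrightarrow> v = u \<or> v = -u" for v
  proof
    assume h: "Dv v = Dv u"
    have v2: "\<bar>v\<bar> \<ge> 2"
    proof (rule ccontr)
      assume "\<not> \<bar>v\<bar> \<ge> 2" then have "\<bar>v\<bar> \<le> 1" by simp
      then have "Dv v = UNIV" by (rule D_univ)
      then show False using D_not_univ[OF u] h by simp
    qed
    have "\<bar>v\<bar> = \<bar>u\<bar>" using D_inj[OF v2 u h] .
    then show "v = u \<or> v = -u" by (auto simp: abs_if split: if_splits)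
  next
    assume "v = u \<or> v = -u" then show "Dv v = Dv u" using D_neg by auto
  qed
  then show ?thesis unfolding Kc_def by auto
qed

lemma card_K: "card (Kc u) = (if \<bar>u\<bar> \<le> 1 then 3 else 2)"
proof (cases "\<bar>u\<bar> \<le> 1")
  case True
  have "card {-1, 0, 1::int} = 3" by simp
  then show ?thesis using K_small[OF True] True by simp
next
  case False then have u2: "\<bar>u\<bar> \<ge> 2" by simp
  then have "u \<noteq> -u" by arith
  then have "card {u, -u} = 2" by simp
  then show ?thesis using K_big[OF u2] False by simp
qed


lemma cop_shift: "(n::nat) = k * a + c \<Longrightarrow> coprime a c \<Longrightarrow> coprime a n"
  by (simp add: coprime_iff_gcd_eq_1 gcd_add_mult)

lemma four_units: assumes "(n::nat) > 0" "n \<notin> {1,2,3,4,6}"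
  shows "\<exists>A. A \<subseteq> {k. k < n \<and> coprime k n} \<and> card A = 4"
proof (cases "odd n")
  case True
  then have n5: "n \<ge> 5" using assms by (auto elim!: oddE)
  have c2: "coprime 2 n" using True by simp
  have c3: "coprime (n-2) n"
    by (rule cop_shift[of n 1 "n-2" 2]) (use n5 True in auto)
  have c4: "coprime (n-1) n" using n5 coprime_diff_one_left_nat[of n] by simp
  have "card {1,2,n-2,n-1} = 4" using n5 by (simp add: card_insert_if) linarith
  moreover have "{1,2,n-2,n-1} \<subseteq> {k. k < n \<and> coprime k n}" using c2 c3 c4 n5 by auto
  ultimately show ?thesis by blast
next
  case False
  then obtain r where r: "n = 2*r" by (auto elim!: evenE)
  show ?thesis
  proof (cases "even r")
    case True
    then obtain q where q: "r = 2*q" by (auto elim!: evenE)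
    have q2: "q \<ge> 2" using assms r q by auto
    have c1: "coprime (2*q-1) n"
      by (rule cop_shift[of n 2 "2*q-1" 2]) (use r q q2 in auto)
    have cc: "coprime (2*q+1) (2*q-1)"
      by (rule cop_shift[of "2*q+1" 1 "2*q-1" 2, THEN coprime_commute[THEN iffD1]]) (use q2 in auto)
    have c2: "coprime (2*q+1) n"
      by (rule cop_shift[of n 1 "2*q+1" "2*q-1"]) (use r q q2 cc in auto)
    have c3: "coprime (4*q-1) n" using r q q2 coprime_diff_one_left_nat[of n] by simp
    have "card {1,2*q-1,2*q+1,4*q-1} = 4" using q2 by (simp add: card_insert_if) linarith
    moreover have "{1,2*q-1,2*q+1,4*q-1} \<subseteq> {k. k < n \<and> coprime k n}" using c1 c2 c3 q2 r q by auto
    ultimately show ?thesis by blast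
  next
    case False
    then obtain q where q: "r = 2*q+1" by (auto elim!: oddE)
    have q2: "q \<ge> 2" using assms r q by auto
    have o: "odd (2*q-1)" using q2 by presburger
    have c0: "coprime (2*q-1) 4"
    proof -
      have "coprime (2*q-1) (2^2)" using o by (simp only: coprime_power_right_iff coprime_right_2_iff_odd) simp
      then show ?thesis by simp
    qed
    have c1: "coprime (2*q-1) n"
      by (rule cop_shift[of n 2 "2*q-1" 4]) (use r q q2 c0 in auto)
    have cc: "coprime (2*q+3) (2*q-1)"
      by (rule cop_shift[of "2*q+3" 1 "2*q-1" 4, THEN coprime_commute[THEN iffD1]]) (use q2 c0 in auto)
    have c2: "coprime (2*q+3) n"
      by (rule cop_shift[of n 1 "2*q+3" "2*q-1"]) (use r q q2 cc in auto)
    have c3: "coprime (4*q+1) n" using r q coprime_diff_one_left_nat[of n] by simp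
    have "card {1,2*q-1,2*q+3,4*q+1} = 4" using q2 by (simp add: card_insert_if) linarith
    moreover have "{1,2*q-1,2*q+3,4*q+1} \<subseteq> {k. k < n \<and> coprime k n}" using c1 c2 c3 q2 r q by auto
    ultimately show ?thesis by blast
  qed
qed

locale pal =
  fixes G :: "'a set" and mult :: "'a \<Rightarrow> 'a \<Rightarrow> 'a" and e :: 'a
  assumes pal: "power_assoc_loop G mult e"
begin

lemma lp: "loop G mult e" using pal unfolding power_assoc_loop_def by (rule conjunct1)
lemmas L = lp[unfolded loop_def]
lemma e_in: "e \<in> G" using L by (rule conjunct1)
lemma mult_in: "a \<in> G \<Longrightarrow> b \<in> G \<Longrightarrow> mult a b \<in> G"
  using L[THEN conjunct2, THEN conjunct1] by blast
lemma e_lr: "a \<in> G \<Longrightarrow> mult e a = a \<and> mult a e = a"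
  using L[THEN conjunct2, THEN conjunct2, THEN conjunct1] by blast
lemma e_l: "a \<in> G \<Longrightarrow> mult e a = a" using e_lr by blast
lemma e_r: "a \<in> G \<Longrightarrow> mult a e = a" using e_lr by blast
lemma ex1l: "a \<in> G \<Longrightarrow> b \<in> G \<Longrightarrow> \<exists>!x. x \<in> G \<and> mult a x = b"
  using L[THEN conjunct2, THEN conjunct2, THEN conjunct2, THEN conjunct1] by blast
lemma ex1r: "a \<in> G \<Longrightarrow> b \<in> G \<Longrightarrow> \<exists>!x. x \<in> G \<and> mult x a = b"
  using L[THEN conjunct2, THEN conjunct2, THEN conjunct2, THEN conjunct2] by blast

lemma ldiv_ok: assumes "a \<in> G" "b \<in> G"
  shows "ldiv G mult a b \<in> G \<and> mult a (ldiv G mult a b) = b"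
proof -
  have "\<exists>!x. x \<in> G \<and> mult a x = b" using ex1l assms by blast
  then show ?thesis unfolding ldiv_def by (rule theI')
qed

lemma ldiv_uniq: assumes "a \<in> G" "b \<in> G" "z \<in> G" "mult a z = b"
  shows "ldiv G mult a b = z"
proof -
  have "\<exists>!x. x \<in> G \<and> mult a x = b" using ex1l assms by blast
  then show ?thesis unfolding ldiv_def using assms by (auto intro: the1_equality)
qed

lemma rdiv_ok: assumes "a \<in> G" "b \<in> G"
  shows "rdiv G mult b a \<in> G \<and> mult (rdiv G mult b a) a = b"
proof -
  have "\<exists>!x. x \<in> G \<and> mult x a = b" using ex1r assms by blast
  then show ?thesis unfolding rdiv_def by (rule theI')
qed

abbreviation S where "S x \<equiv> subloop_gen G mult e x"

lemma S_sub: assumes "x \<in> G" shows "S x \<subseteq> G"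
proof
  fix y assume "y \<in> S x" then show "y \<in> G"
  proof induction
    case gen then show ?case using assms .
  next
    case unit then show ?case using e_in .
  next
    case (mult a b) then show ?case using mult_in by blast
  next
    case (ldiv a b) then show ?case using ldiv_ok by blast
  next
    case (rdiv a b) then show ?case using rdiv_ok by blast
  qed
qed

lemma S_assoc: "x \<in> G \<Longrightarrow> a \<in> S x \<Longrightarrow> b \<in> S x \<Longrightarrow> c \<in> S x \<Longrightarrow>
   mult (mult a b) c = mult a (mult b c)"
  using pal[unfolded power_assoc_loop_def, THEN conjunct2] by blast

definition SG :: "'a \<Rightarrow> 'a monoid" where
  "SG x = \<lparr>carrier = S x, monoid.mult = mult, one = e\<rparr>"

lemma grp: assumes "x \<in> G" shows "group (SG x)"
proof (rule groupI)
  fix a b assume "a \<in> carrier (SG x)" "b \<in> carrier (SG x)"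
  then show "a \<otimes>\<^bsub>SG x\<^esub> b \<in> carrier (SG x)" by (simp add: SG_def subloop_gen.mult)
next
  show "\<one>\<^bsub>SG x\<^esub> \<in> carrier (SG x)" by (simp add: SG_def subloop_gen.unit)
next
  fix a b c assume "a \<in> carrier (SG x)" "b \<in> carrier (SG x)" "c \<in> carrier (SG x)"
  then show "a \<otimes>\<^bsub>SG x\<^esub> b \<otimes>\<^bsub>SG x\<^esub> c = a \<otimes>\<^bsub>SG x\<^esub> (b \<otimes>\<^bsub>SG x\<^esub> c)"
    using S_assoc assms by (simp add: SG_def)
next
  fix a assume "a \<in> carrier (SG x)"
  then show "\<one>\<^bsub>SG x\<^esub> \<otimes>\<^bsub>SG x\<^esub> a = a" using S_sub assms e_l by (auto simp: SG_def)
next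
  fix a assume a: "a \<in> carrier (SG x)"
  then have aS: "a \<in> S x" by (simp add: SG_def)
  have "rdiv G mult e a \<in> S x" by (rule subloop_gen.rdiv[OF subloop_gen.unit aS])
  moreover have "mult (rdiv G mult e a) a = e" using rdiv_ok[of a e] aS S_sub assms e_in by auto
  ultimately show "\<exists>y\<in>carrier (SG x). y \<otimes>\<^bsub>SG x\<^esub> a = \<one>\<^bsub>SG x\<^esub>" by (auto simp: SG_def)
qed

lemma carr: "carrier (SG x) = S x" by (simp add: SG_def)

lemma npow_eq: assumes "x \<in> G" "y \<in> S x"
  shows "y [^]\<^bsub>SG x\<^esub> (n::nat) = npow mult e y n"
proof (induction n)
  case 0 then show ?case by (simp add: SG_def)
next
  case (Suc n)
  interpret g: group "SG x" by (rule grp[OF assms(1)])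
  have "y [^]\<^bsub>SG x\<^esub> Suc n = y \<otimes>\<^bsub>SG x\<^esub> y [^]\<^bsub>SG x\<^esub> n"
    using g.nat_pow_Suc2 assms(2) carr by blast
  then show ?case using Suc by (simp add: SG_def)
qed

lemma zpow_eq: assumes "x \<in> G" "y \<in> S x"
  shows "zpow G mult e y k = y [^]\<^bsub>SG x\<^esub> k"
proof (cases "0 \<le> k")
  case True
  then show ?thesis using npow_eq[OF assms] by (simp add: zpow_def int_pow_def2)
next
  case False
  interpret g: group "SG x" by (rule grp[OF assms(1)])
  let ?a = "y [^]\<^bsub>SG x\<^esub> (nat (-k))"
  have aS: "?a \<in> S x" using g.nat_pow_closed[of y] assms(2) carr by auto
  have iS: "inv\<^bsub>SG x\<^esub> ?a \<in> S x" using g.inv_closed[of ?a] aS carr by auto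
  have "mult ?a (inv\<^bsub>SG x\<^esub> ?a) = e" using g.r_inv[of ?a] aS carr by (simp add: SG_def)
  then have "ldiv G mult ?a e = inv\<^bsub>SG x\<^esub> ?a"
    using ldiv_uniq aS iS S_sub[OF assms(1)] e_in by blast
  then show ?thesis using False npow_eq[OF assms] by (simp add: zpow_def int_pow_def2)
qed


lemma S_G: "x \<in> G \<Longrightarrow> y \<in> S x \<Longrightarrow> y \<in> G" using S_sub by blast

lemma xS: "x \<in> S x" by (rule subloop_gen.gen)

definition P where "P y = range (zpow G mult e y)"
definition ordL where "ordL y = group.ord (SG y) y"

lemma zpow_self: "x \<in> G \<Longrightarrow> zpow G mult e x k = x [^]\<^bsub>SG x\<^esub> k"
  by (rule zpow_eq[OF _ subloop_gen.gen])

lemma P_sub: assumes "x \<in> G" shows "P x \<subseteq> S x"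
proof -
  interpret gx: group "SG x" by (rule grp[OF assms])
  show ?thesis unfolding P_def using zpow_self[OF assms] gx.int_pow_closed xS carr by auto
qed

lemma P_G: "x \<in> G \<Longrightarrow> P x \<subseteq> G" using P_sub S_sub by blast
lemma zpow_in: "zpow G mult e x k \<in> P x" by (simp add: P_def)
lemma zpow_1: "x \<in> G \<Longrightarrow> zpow G mult e x 1 = x" by (simp add: zpow_def e_r)
lemma zpow_0: "zpow G mult e x 0 = e" by (simp add: zpow_def)
lemma self_P: "x \<in> G \<Longrightarrow> x \<in> P x" using zpow_in[of x 1] zpow_1 by simp
lemma e_P: "e \<in> P x" using zpow_in[of x 0] zpow_0 by simp

lemma ord_tr: assumes "x \<in> G" "y \<in> S x" shows "group.ord (SG x) y = ordL y"
proof -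
  interpret gx: group "SG x" by (rule grp[OF assms(1)])
  have yG: "y \<in> G" using S_sub assms by blast
  interpret gy: group "SG y" by (rule grp[OF yG])
  have "\<forall>n. y [^]\<^bsub>SG x\<^esub> n = \<one>\<^bsub>SG x\<^esub> \<longleftrightarrow> ordL y dvd n"
  proof
    fix n :: nat
    have "y [^]\<^bsub>SG y\<^esub> n = \<one>\<^bsub>SG y\<^esub> \<longleftrightarrow> ordL y dvd n" unfolding ordL_def
      by (rule gy.pow_eq_id) (simp add: carr subloop_gen.gen)
    then show "y [^]\<^bsub>SG x\<^esub> n = \<one>\<^bsub>SG x\<^esub> \<longleftrightarrow> ordL y dvd n"
      using npow_eq[OF assms, of n] npow_eq[OF yG subloop_gen.gen, of n] by (simp add: SG_def)
  qed
  then show ?thesis using gx.ord_unique assms(2) carr by blast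
qed

lemma zpow_zpow: assumes "x \<in> G"
  shows "zpow G mult e (zpow G mult e x k) j = zpow G mult e x (k*j)"
proof -
  interpret gx: group "SG x" by (rule grp[OF assms])
  have a: "zpow G mult e x k \<in> S x" using P_sub[OF assms] zpow_in by blast
  show ?thesis using zpow_eq[OF assms a, of j] zpow_self[OF assms] gx.int_pow_pow[of x k j]
    xS carr by auto
qed

lemma P_mono: assumes "x \<in> G" "a \<in> P x" shows "P a \<subseteq> P x"
proof -
  obtain k where "a = zpow G mult e x k" using assms(2) unfolding P_def by blast
  then show ?thesis unfolding P_def using zpow_zpow[OF assms(1)] by auto
qed

lemma P_iff: "x \<in> G \<Longrightarrow> a \<in> G \<Longrightarrow> a \<in> P x \<longleftrightarrow> P a \<subseteq> P x"
  using P_mono self_P by blast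

lemma card_P: assumes "x \<in> G" shows "card (P x) = ordL x"
proof -
  interpret gx: group "SG x" by (rule grp[OF assms])
  have xc: "x \<in> carrier (SG x)" by (simp add: carr subloop_gen.gen)
  have "P x = generate (SG x) {x}" unfolding gx.generate_pow[OF xc] P_def using zpow_self[OF assms] by auto
  then show ?thesis unfolding ordL_def using gx.generate_pow_card[OF xc] by simp
qed

lemma zpow_e_iff: assumes "x \<in> G"
  shows "zpow G mult e x k = e \<longleftrightarrow> int (ordL x) dvd k"
proof -
  interpret gx: group "SG x" by (rule grp[OF assms])
  have xc: "x \<in> carrier (SG x)" by (simp add: carr subloop_gen.gen)
  show ?thesis using gx.int_pow_eq_id[OF xc, of k] zpow_self[OF assms] unfolding ordL_def by (simp add: SG_def)
qed

lemma zpow_eq_iff: assumes "x \<in> G"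
  shows "zpow G mult e x k = zpow G mult e x j \<longleftrightarrow> int (ordL x) dvd (j - k)"
proof -
  interpret gx: group "SG x" by (rule grp[OF assms])
  have xc: "x \<in> carrier (SG x)" by (simp add: carr subloop_gen.gen)
  show ?thesis using gx.int_pow_eq[OF xc, of k j] zpow_self[OF assms] unfolding ordL_def by simp
qed

lemma fo_iff: assumes "x \<in> G" shows "finite_order mult e x \<longleftrightarrow> ordL x \<noteq> 0"
proof -
  interpret gx: group "SG x" by (rule grp[OF assms])
  have xc: "x \<in> carrier (SG x)" by (simp add: carr subloop_gen.gen)
  show ?thesis using gx.ord_eq_0[OF xc] npow_eq[OF assms subloop_gen.gen] unfolding ordL_def finite_order_def
    by (auto simp: SG_def)
qed

lemma ord_dvd: assumes "x \<in> G" "a \<in> P x" shows "ordL a dvd ordL x"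
proof -
  obtain k where k: "a = zpow G mult e x k" using assms(2) unfolding P_def by blast
  have aG: "a \<in> G" using assms P_G by blast
  have "zpow G mult e a (int (ordL x)) = zpow G mult e x (k * int (ordL x))" using k zpow_zpow[OF assms(1)] by simp
  also have "\<dots> = e" using zpow_e_iff[OF assms(1)] by simp
  finally show ?thesis using zpow_e_iff[OF aG] by simp
qed

lemma ord1: assumes "x \<in> G" "ordL x = 1" shows "x = e"
  using zpow_eq_iff[OF assms(1), of 1 0] assms zpow_1 zpow_0 by simp

lemma adj_iff: "pg_adj G mult e a b \<longleftrightarrow> a \<in> G \<and> b \<in> G \<and> a \<noteq> b \<and> (b \<in> P a \<or> a \<in> P b)"
  unfolding pg_adj_def P_def by auto

lemma cn: assumes "b \<in> G" shows "closed_nbhd G mult e b = {w\<in>G. P w \<subseteq> P b \<or> P b \<subseteq> P w}"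
  unfolding closed_nbhd_def adj_iff using P_iff self_P assms by auto

lemma center_P: "x \<in> pg_center G mult e \<Longrightarrow> y \<in> G \<Longrightarrow> y \<in> P x \<or> x \<in> P y"
  unfolding pg_center_def adj_iff using self_P by auto


lemma inf_case: assumes xc: "x \<in> pg_center G mult e" and xe: "x \<noteq> e"
    and zG: "z \<in> G" and zinf: "\<not> finite_order mult e z"
  shows "iso_to_int G mult"
proof -
  have xG: "x \<in> G" using xc unfolding pg_center_def by blast
  have oz: "ordL z = 0" using fo_iff[OF zG] zinf by simp
  have ox: "ordL x = 0"
  proof (rule ccontr)
    assume ox: "ordL x \<noteq> 0"
    from center_P[OF xc zG] show False
    proof
      assume "z \<in> P x"
      then have "ordL z dvd ordL x" by (rule ord_dvd[OF xG])
      then show False using ox oz by simp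
    next
      assume "x \<in> P z"
      then obtain k where k: "x = zpow G mult e z k" unfolding P_def by blast
      have "zpow G mult e z (k * int (ordL x)) = zpow G mult e x (int (ordL x))"
        using k zpow_zpow[OF zG] by simp
      also have "\<dots> = e" using zpow_e_iff[OF xG] by simp
      finally have "k * int (ordL x) = 0" using zpow_e_iff[OF zG] oz by simp
      then have "k = 0" using ox by simp
      then show False using k xe zpow_0 by simp
    qed
  qed
  have allP: "y \<in> P x" if yG: "y \<in> G" for y
  proof (rule ccontr)
    assume ny: "y \<notin> P x"
    then have xy: "x \<in> P y" using center_P[OF xc yG] by blast
    then obtain n where n: "x = zpow G mult e y n" unfolding P_def by blast
    have oy: "ordL y = 0" using ord_dvd[OF yG xy] ox by simp
    have inj: "zpow G mult e y a = zpow G mult e y b \<longleftrightarrow> a = b" for a b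
      using zpow_eq_iff[OF yG, of a b] oy by auto
    have n0: "n \<noteq> 0" using n xe zpow_0 by auto
    have n1: "n \<noteq> 1" using n ny self_P[OF xG] zpow_1[OF yG] by auto
    have nm1: "n \<noteq> -1"
    proof
      assume "n = -1"
      then have "zpow G mult e x (-1) = y" using n zpow_zpow[OF yG, of n "-1"] zpow_1[OF yG] by simp
      then show False using ny zpow_in by metis
    qed
    have n2: "\<bar>n\<bar> \<ge> 2" using n0 n1 nm1 by arith
    define w where "w = zpow G mult e y (n + sgn n)"
    have wG: "w \<in> G" using P_G[OF yG] zpow_in w_def by blast
    from center_P[OF xc wG] show False
    proof
      assume "w \<in> P x" then obtain k where "w = zpow G mult e x k" unfolding P_def by blast
      then have "zpow G mult e y (n + sgn n) = zpow G mult e y (n*k)" using w_def n zpow_zpow[OF yG] by simp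
      then show False using inj arith3(1)[OF n2] by simp
    next
      assume "x \<in> P w" then obtain k where "x = zpow G mult e w k" unfolding P_def by blast
      then have "zpow G mult e y n = zpow G mult e y ((n + sgn n)*k)" using w_def n zpow_zpow[OF yG] by simp
      then show False using inj arith3(2)[OF n2] by simp
    qed
  qed
  define h where "h = zpow G mult e x"
  have hinj: "inj h" unfolding h_def inj_def using zpow_eq_iff[OF xG] ox by simp
  have himg: "range h = G" using allP P_G[OF xG] unfolding h_def P_def by blast
  have hhom: "h (a + b) = mult (h a) (h b)" for a b
  proof -
    interpret gx: group "SG x" by (rule grp[OF xG])
    show ?thesis unfolding h_def zpow_self[OF xG] using gx.int_pow_mult[of x a b] xS carr by (simp add: SG_def)
  qed
  define f where "f = inv_into UNIV h"
  have "bij_betw h UNIV G" using hinj himg by (simp add: bij_betw_def)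
  then have fb: "bij_betw f G UNIV" unfolding f_def by (rule bij_betw_inv_into)
  have "\<forall>a\<in>G. \<forall>b\<in>G. f (mult a b) = f a + f b"
  proof (intro ballI)
    fix a b assume "a \<in> G" "b \<in> G"
    then have "a = h (f a)" "b = h (f b)" using himg unfolding f_def by (auto simp: f_inv_into_f)
    then have "mult a b = h (f a + f b)" using hhom by simp
    then show "f (mult a b) = f a + f b" unfolding f_def using hinj by (simp add: inv_into_f_f)
  qed
  then show ?thesis unfolding iso_to_int_def using fb by blast
qed


lemma iso_classes: assumes "iso_to_int G mult"
  shows "(\<forall>C\<in>nbhd_classes G mult e. card C = 2 \<or> card C = 3)
             \<and> countable {C\<in>nbhd_classes G mult e. card C = 2}
             \<and> infinite {C\<in>nbhd_classes G mult e. card C = 2}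
             \<and> (\<exists>!C. C \<in> nbhd_classes G mult e \<and> card C = 3)"
proof -
  obtain f where fb: "bij_betw f G (UNIV::int set)" and fh: "\<forall>a\<in>G. \<forall>b\<in>G. f (mult a b) = f a + f b"
    using assms unfolding iso_to_int_def by blast
  define g where "g = inv_into G f"
  have finj: "inj_on f G" and fimg: "f ` G = UNIV" using fb by (auto simp: bij_betw_def)
  have gG: "g u \<in> G" for u unfolding g_def using fimg by (metis UNIV_I inv_into_into)
  have fg: "f (g u) = u" for u unfolding g_def using fimg by (metis UNIV_I f_inv_into_f)
  have gf: "g (f a) = a" if "a \<in> G" for a unfolding g_def using finj that by (rule inv_into_f_f)
  have finj': "a = b" if "a \<in> G" "b \<in> G" "f a = f b" for a b using gf that by metis
  have fe: "f e = 0"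
  proof -
    have "f (mult e e) = f e + f e" using fh e_in by blast
    then show ?thesis using e_l[OF e_in] by simp
  qed
  have fnp: "npow mult e a n \<in> G \<and> f (npow mult e a n) = int n * f a" if aG: "a \<in> G" for a n
  proof (induction n)
    case 0 then show ?case using e_in fe by simp
  next
    case (Suc n) then show ?case using mult_in[OF aG] fh aG by (simp add: algebra_simps)
  qed
  have fz: "f (zpow G mult e a k) = k * f a" if aG: "a \<in> G" for a k
  proof (cases "0 \<le> k")
    case True then show ?thesis using fnp[OF aG, of "nat k"] by (simp add: zpow_def)
  next
    case False
    let ?b = "npow mult e a (nat (-k))"
    have b: "?b \<in> G" "f ?b = int (nat (-k)) * f a" using fnp[OF aG] by auto
    have l: "ldiv G mult ?b e \<in> G \<and> mult ?b (ldiv G mult ?b e) = e" using ldiv_ok b(1) e_in by blast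
    then have "f (mult ?b (ldiv G mult ?b e)) = f ?b + f (ldiv G mult ?b e)" using fh b(1) by blast
    then have "f ?b + f (ldiv G mult ?b e) = 0" using l fe by simp
    then show ?thesis using False b(2) by (simp add: zpow_def algebra_simps)
  qed
  have inP: "b \<in> P a \<longleftrightarrow> f a dvd f b" if ab: "a \<in> G" "b \<in> G" for a b
  proof
    assume "b \<in> P a" then obtain k where "b = zpow G mult e a k" unfolding P_def by blast
    then show "f a dvd f b" using fz[OF ab(1)] by simp
  next
    assume "f a dvd f b" then obtain k where k: "f b = f a * k" by blast
    have "f (zpow G mult e a k) = f b" using fz[OF ab(1)] k by (simp add: mult.commute)
    then have "zpow G mult e a k = b" using finj' P_G[OF ab(1)] zpow_in ab(2) by blast
    then show "b \<in> P a" using zpow_in by metis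
  qed
  have cnf: "closed_nbhd G mult e a = {b\<in>G. f b \<in> Dv (f a)}" if aG: "a \<in> G" for a
  proof -
    have "closed_nbhd G mult e a = insert a {b\<in>G. b \<noteq> a \<and> (f a dvd f b \<or> f b dvd f a)}"
      unfolding closed_nbhd_def adj_iff using inP aG by auto
    also have "\<dots> = {b\<in>G. f b \<in> Dv (f a)}" unfolding Dv_def using aG by auto
    finally show ?thesis .
  qed
  have cls: "nbhd_class G mult e a = g ` Kc (f a)" if aG: "a \<in> G" for a
  proof -
    have eq: "closed_nbhd G mult e b = closed_nbhd G mult e a \<longleftrightarrow> Dv (f b) = Dv (f a)" if bG: "b \<in> G" for b
    proof
      assume "closed_nbhd G mult e b = closed_nbhd G mult e a"
      then have h: "{c\<in>G. f c \<in> Dv (f b)} = {c\<in>G. f c \<in> Dv (f a)}" using cnf aG bG by simp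
      have r: "Dv u = {v. g v \<in> {c\<in>G. f c \<in> Dv u}}" for u using gG fg by auto
      show "Dv (f b) = Dv (f a)" using r[of "f b"] r[of "f a"] h by simp
    next
      assume "Dv (f b) = Dv (f a)"
      then show "closed_nbhd G mult e b = closed_nbhd G mult e a" using cnf aG bG by simp
    qed
    show ?thesis
    proof (intro equalityI subsetI)
      fix b assume "b \<in> nbhd_class G mult e a"
      then have bG: "b \<in> G" and "Dv (f b) = Dv (f a)" using eq unfolding nbhd_class_def by auto
      then have "f b \<in> Kc (f a)" unfolding Kc_def by simp
      then show "b \<in> g ` Kc (f a)" using gf[OF bG] by (metis image_eqI)
    next
      fix b assume "b \<in> g ` Kc (f a)"
      then obtain v where v: "v \<in> Kc (f a)" "b = g v" by blast
      then have "Dv (f b) = Dv (f a)" using fg unfolding Kc_def by simp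
      then show "b \<in> nbhd_class G mult e a" using eq v gG unfolding nbhd_class_def by simp
    qed
  qed
  have ginj: "inj g" using fg by (metis injI)
  have cardcls: "card (nbhd_class G mult e a) = card (Kc (f a))" if "a \<in> G" for a
    using cls[OF that] card_image[OF inj_on_subset[OF ginj subset_UNIV]] by simp
  have P1: "\<forall>C\<in>nbhd_classes G mult e. card C = 2 \<or> card C = 3"
    unfolding nbhd_classes_def using cardcls card_K by auto
  have Grange: "G = range g"
  proof (intro equalityI subsetI)
    fix a assume "a \<in> G" then have "a = g (f a)" using gf by simp
    then show "a \<in> range g" by (rule range_eqI)
  next
    fix a assume "a \<in> range g" then show "a \<in> G" using gG by blast
  qed
  have "countable (range g)" by (rule countable_image) simp
  then have "countable G" using Grange by simp
  then have "countable (nbhd_classes G mult e)" unfolding nbhd_classes_def by (rule countable_image)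
  then have P2: "countable {C\<in>nbhd_classes G mult e. card C = 2}" by (rule countable_subset[rotated]) auto
  define T where "T = (\<lambda>n. g ` Kc n) ` {2::int..}"
  have TS: "T \<subseteq> {C\<in>nbhd_classes G mult e. card C = 2}"
  proof
    fix C assume "C \<in> T"
    then obtain n where n: "n \<ge> 2" "C = g ` Kc n" unfolding T_def by blast
    have Cn: "C = nbhd_class G mult e (g n)" using cls[OF gG] fg n by simp
    have "card C = card (Kc n)" using Cn cardcls[OF gG, of n] fg by simp
    moreover have "card (Kc n) = 2" using card_K[of n] n by simp
    ultimately have "card C = 2" by simp
    note Cn this
    then show "C \<in> {C\<in>nbhd_classes G mult e. card C = 2}"
      unfolding nbhd_classes_def using gG by auto
  qed
  have "inj_on (\<lambda>n. g ` Kc n) {2::int..}"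
  proof (rule inj_onI)
    fix n m :: int assume nm: "n \<in> {2..}" "m \<in> {2..}" "g ` Kc n = g ` Kc m"
    then have "Kc n = Kc m" using ginj by (simp add: inj_image_eq_iff)
    then have "{n, -n} = {m, -m}" using K_big nm by simp
    then show "n = m" using nm by (auto simp: doubleton_eq_iff)
  qed
  then have "infinite T" unfolding T_def using infinite_Ici finite_imageD by blast
  then have P3: "infinite {C\<in>nbhd_classes G mult e. card C = 2}" using TS finite_subset by blast
  have P4: "\<exists>!C. C \<in> nbhd_classes G mult e \<and> card C = 3"
  proof
    have c0: "nbhd_class G mult e (g 0) = g ` Kc 0" using cls[OF gG, of 0] fg by simp
    have "g ` Kc 0 \<in> nbhd_classes G mult e" unfolding nbhd_classes_def using c0 gG[of 0] by (metis image_eqI)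
    moreover have "card (g ` Kc 0) = 3" using c0 cardcls[OF gG, of 0] fg card_K[of 0] by simp
    ultimately show "g ` Kc 0 \<in> nbhd_classes G mult e \<and> card (g ` Kc 0) = 3" by simp
  next
    fix C assume C: "C \<in> nbhd_classes G mult e \<and> card C = 3"
    then obtain a where a: "a \<in> G" "C = nbhd_class G mult e a" unfolding nbhd_classes_def by blast
    then have "card (Kc (f a)) = 3" using C cardcls by simp
    then have "\<bar>f a\<bar> \<le> 1" using card_K[of "f a"] by (simp split: if_splits)
    then have "Kc (f a) = Kc 0" using K_small[of "f a"] K_small[of 0] by simp
    then show "C = g ` Kc 0" using cls a by simp
  qed
  show ?thesis using P1 P2 P3 P4 by blast
qed


lemma ord_small: assumes yG: "y \<in> G" and n0: "ordL y \<noteq> 0"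
    and fin: "finite (nbhd_class G mult e y)" and c3: "card (nbhd_class G mult e y) \<le> 3"
  shows "ordL y \<in> {1,2,3,4,6}"
proof (rule ccontr)
  assume nn: "ordL y \<notin> {1,2,3,4,6}"
  let ?n = "ordL y"
  obtain A where A: "A \<subseteq> {k. k < ?n \<and> coprime k ?n}" "card A = 4"
    using four_units[of ?n] n0 nn by auto
  let ?F = "\<lambda>k::nat. zpow G mult e y (int k)"
  have sub: "?F ` A \<subseteq> nbhd_class G mult e y"
  proof
    fix z assume "z \<in> ?F ` A"
    then obtain k where k: "k \<in> A" "z = ?F k" by blast
    have cop: "coprime k ?n" using A k by auto
    obtain j where j: "[k * j = Suc 0] (mod ?n)" using cong_solve_coprime_nat[OF cop] by blast
    have zG: "z \<in> G" using k P_G[OF yG] zpow_in by blast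
    have zP: "z \<in> P y" using k zpow_in by simp
    have "zpow G mult e z (int j) = zpow G mult e y (int k * int j)" using k zpow_zpow[OF yG] by simp
    also have "\<dots> = zpow G mult e y 1"
    proof -
      have "[int (k*j) = int (Suc 0)] (mod int ?n)" using j cong_int_iff by blast
      then have "int ?n dvd int (k*j) - 1" by (simp add: cong_iff_dvd_diff)
      then have "int ?n dvd 1 - int k * int j" by (simp add: dvd_diff_commute)
      then show ?thesis using zpow_eq_iff[OF yG, of "int k * int j" 1] by simp
    qed
    finally have "zpow G mult e z (int j) = y" using zpow_1[OF yG] by simp
    then have "y \<in> P z" using zpow_in[of z "int j"] by simp
    then have "P y = P z" using P_mono[OF yG zP] P_mono[OF zG] by blast
    then have "closed_nbhd G mult e z = closed_nbhd G mult e y" using cn zG yG by simp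
    then show "z \<in> nbhd_class G mult e y" unfolding nbhd_class_def using zG by simp
  qed
  have inj: "inj_on ?F A"
  proof (rule inj_onI)
    fix a b assume ab: "a \<in> A" "b \<in> A" "?F a = ?F b"
    then have d: "int ?n dvd int b - int a" using zpow_eq_iff[OF yG] by blast
    have lt: "a < ?n" "b < ?n" using A ab by auto
    show "a = b"
    proof (rule ccontr)
      assume "a \<noteq> b" then have "int b - int a \<noteq> 0" by simp
      then have "\<bar>int ?n\<bar> \<le> \<bar>int b - int a\<bar>" using d by (rule dvd_imp_le_int)
      then show False using lt by arith
    qed
  qed
  have "card (?F ` A) = 4" using card_image[OF inj] A by simp
  then have "4 \<le> card (nbhd_class G mult e y)" using card_mono[OF fin sub] by simp
  then show False using c3 by simp
qed

lemma torsion_false: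
  assumes xc: "x \<in> pg_center G mult e" and xe: "x \<noteq> e"
    and tor: "\<forall>y\<in>G. finite_order mult e y" and inf: "infinite G"
    and cl: "\<forall>C\<in>nbhd_classes G mult e. card C = 2 \<or> card C = 3"
    and c3: "\<exists>C\<in>nbhd_classes G mult e. card C = 3"
  shows False
proof -
  have xG: "x \<in> G" using xc unfolding pg_center_def by blast
  have opos: "ordL y \<noteq> 0" if "y \<in> G" for y using tor fo_iff that by blast
  have osm: "ordL y \<in> {1,2,3,4,6}" if yG: "y \<in> G" for y
  proof -
    have "nbhd_class G mult e y \<in> nbhd_classes G mult e" using yG unfolding nbhd_classes_def by blast
    then have "card (nbhd_class G mult e y) = 2 \<or> card (nbhd_class G mult e y) = 3" using cl by blast
    then have "finite (nbhd_class G mult e y)" "card (nbhd_class G mult e y) \<le> 3"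
      by (auto intro: card_ge_0_finite)
    then show ?thesis using ord_small yG opos by blast
  qed
  have finP: "finite (P y)" if "y \<in> G" for y
    using card_P[OF that] opos[OF that] by (metis card_ge_0_finite neq0_conv)
  let ?m = "ordL x"
  have m1: "?m \<noteq> 1" using ord1 xG xe by blast
  have big: "x \<in> P y \<and> ?m dvd ordL y \<and> ?m < ordL y" if yG: "y \<in> G" and ny: "y \<notin> P x" for y
  proof -
    have xy: "x \<in> P y" using center_P[OF xc yG] ny by blast
    have sub: "P x \<subseteq> P y" using P_mono[OF yG xy] .
    have ne: "P x \<noteq> P y" using ny self_P[OF yG] by blast
    have "card (P x) < card (P y)" using psubset_card_mono[OF finP[OF yG]] sub ne by blast
    then show ?thesis using xy ord_dvd[OF yG xy] card_P xG yG by simp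
  qed
  have not6: False if yG: "y \<in> G" and ny: "y \<notin> P x" and o6: "ordL y = 6" for y
  proof -
    have m6: "?m dvd 6" "?m < 6" using big[OF yG ny] o6 by auto
    have "?m = 1 \<or> ?m = 2 \<or> ?m = 3 \<or> ?m = 4 \<or> ?m = 6" using osm[OF xG] by simp
    then have mm: "?m = 2 \<or> ?m = 3" using m6 m1 by auto
    have "\<exists>q. ?m * q = 6 \<and> ((?m = 2 \<and> q = 3) \<or> (?m = 3 \<and> q = 2))"
      using mm
    proof (elim disjE)
      assume "?m = 2" then show ?thesis by (intro exI[of _ 3]) simp
    next
      assume "?m = 3" then show ?thesis by (intro exI[of _ 2]) simp
    qed
    then obtain q where mq: "?m * q = 6" and qv: "(?m = 2 \<and> q = 3) \<or> (?m = 3 \<and> q = 2)" by blast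
    define z where "z = zpow G mult e y (int ?m)"
    have zG: "z \<in> G" using P_G[OF yG] zpow_in z_def by blast
    have zne: "z \<noteq> e"
    proof
      assume "z = e"
      then have "int (ordL y) dvd int ?m" using zpow_e_iff[OF yG] z_def by simp
      then have "int 6 dvd int ?m" using o6 by simp
      then have "6 dvd ?m" by (simp only: int_dvd_int_iff)
      then show False using qv by auto
    qed
    have "zpow G mult e z (int q) = zpow G mult e y (int ?m * int q)"
      using z_def zpow_zpow[OF yG] by simp
    also have "int ?m * int q = 6" using mq by (simp flip: of_nat_mult)
    also have "zpow G mult e y 6 = e" using zpow_e_iff[OF yG] o6 by simp
    finally have "int (ordL z) dvd int q" using zpow_e_iff[OF zG] by simp
    then have zo': "ordL z dvd q" by simp
    from center_P[OF xc zG] show False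
    proof
      assume "z \<in> P x"
      then have zm: "ordL z dvd ?m" by (rule ord_dvd[OF xG])
      have "ordL z dvd 3 \<and> ordL z dvd 2" using zm zo' qv by auto
      then have "ordL z dvd 3 - 2" using dvd_diff_nat by blast
      then have "ordL z = 1" by simp
      then show False using ord1[OF zG] zne by simp
    next
      assume "x \<in> P z"
      then have "?m dvd ordL z" by (rule ord_dvd[OF zG])
      then have "?m dvd q" using zo' dvd_trans by blast
      then show False using qv by auto
    qed
  qed
  have o4: "ordL y = 4 \<and> ?m = 2" if yG: "y \<in> G" and ny: "y \<notin> P x" for y
  proof -
    have n6: "ordL y \<noteq> 6" using not6 yG ny by blast
    have b: "?m dvd ordL y" "?m < ordL y" using big[OF yG ny] by auto
    have "?m = 1 \<or> ?m = 2 \<or> ?m = 3 \<or> ?m = 4 \<or> ?m = 6" using osm[OF xG] by simp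
    moreover have "ordL y = 1 \<or> ordL y = 2 \<or> ordL y = 3 \<or> ordL y = 4 \<or> ordL y = 6" using osm[OF yG] by simp
    ultimately show ?thesis using b n6 m1 by auto
  qed
  have "\<not> G \<subseteq> P x" using inf finP[OF xG] finite_subset by blast
  then obtain y0 where y0: "y0 \<in> G" "y0 \<notin> P x" by blast
  have m2: "?m = 2" using o4 y0 by blast
  have cPx: "card (P x) = 2" using card_P[OF xG] m2 by simp
  have cl1: "v \<in> closed_nbhd G mult e u" if "u \<in> P x" "v \<in> G" "v \<notin> P x" for u v
  proof -
    have uG: "u \<in> G" using that P_G[OF xG] by blast
    have "P u \<subseteq> P x" using P_mono[OF xG that(1)] .
    moreover have "P x \<subseteq> P v" using big[OF that(2,3)] P_mono[OF that(2)] by blast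
    ultimately show ?thesis using cn[OF uG] that by auto
  qed
  have cl2: "closed_nbhd G mult e v = P v" if vG: "v \<in> G" and nv: "v \<notin> P x" for v
  proof -
    have "P w \<subseteq> P v" if wG: "w \<in> G" and "P v \<subseteq> P w" for w
    proof -
      have "w \<notin> P x"
      proof
        assume "w \<in> P x" then have "P w \<subseteq> P x" using P_mono[OF xG] by blast
        then show False using \<open>P v \<subseteq> P w\<close> self_P[OF vG] nv by blast
      qed
      then have "card (P w) = card (P v)" using o4 wG vG nv card_P by simp
      then show ?thesis using card_subset_eq[OF finP[OF wG] \<open>P v \<subseteq> P w\<close>] by simp
    qed
    then have "closed_nbhd G mult e v = {w\<in>G. P w \<subseteq> P v}" using cn[OF vG] by auto
    also have "\<dots> = P v" using P_iff[OF vG] P_G[OF vG] by auto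
    finally show ?thesis .
  qed
  have cl3: "w \<in> P x" if "z \<in> G" "w \<in> G" "closed_nbhd G mult e z = closed_nbhd G mult e w" "z \<in> P x" for z w
  proof (rule ccontr)
    assume nw: "w \<notin> P x"
    have "finite (P x \<union> P w)" using finP xG that(2) by blast
    then have "\<not> G \<subseteq> P x \<union> P w" using inf finite_subset by blast
    then obtain v where v: "v \<in> G" "v \<notin> P x \<union> P w" by blast
    then have "v \<in> closed_nbhd G mult e z" using cl1 that by blast
    then have "v \<in> P w" using that(3) cl2[OF that(2) nw] by simp
    then show False using v by blast
  qed
  obtain C where C: "C \<in> nbhd_classes G mult e" "card C = 3" using c3 by blast
  then obtain w where w: "w \<in> G" "C = nbhd_class G mult e w" unfolding nbhd_classes_def by blast
  show False
  proof (cases "w \<in> P x")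
    case True
    have "C \<subseteq> P x"
    proof
      fix z assume "z \<in> C"
      then have "z \<in> G" "closed_nbhd G mult e z = closed_nbhd G mult e w" using w unfolding nbhd_class_def by auto
      then show "z \<in> P x" using cl3[of w z] w True by simp
    qed
    then have "card C \<le> 2" using card_mono[OF finP[OF xG]] cPx by fastforce
    then show False using C by simp
  next
    case False
    have xw: "P x \<subseteq> P w" using big[OF w(1) False] P_mono[OF w(1)] by blast
    have "C \<subseteq> P w - P x"
    proof
      fix z assume "z \<in> C"
      then have zG: "z \<in> G" and eqz: "closed_nbhd G mult e z = closed_nbhd G mult e w" using w unfolding nbhd_class_def by auto
      have "z \<in> closed_nbhd G mult e z" unfolding closed_nbhd_def by simp
      then have "z \<in> P w" using eqz cl2[OF w(1) False] by simp
      moreover have "z \<notin> P x" using cl3[OF zG w(1) eqz] False by blast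
      ultimately show "z \<in> P w - P x" by blast
    qed
    moreover have "card (P w - P x) = 2"
      using card_Diff_subset[OF finite_subset[OF xw finP[OF w(1)]] xw] card_P[OF w(1)] o4[OF w(1) False] cPx by simp
    ultimately have "card C \<le> 2" using card_mono[of "P w - P x" C] finP[OF w(1)] by fastforce
    then show False using C by simp
  qed
qed

end

theorem mainTheorem1:
  fixes G :: "'a set" and mult :: "'a \<Rightarrow> 'a \<Rightarrow> 'a" and e :: 'a
  assumes "power_assoc_loop G mult e"
    and "\<exists>x y. x \<in> pg_center G mult e \<and> y \<in> pg_center G mult e \<and> x \<noteq> y"
  shows "(iso_to_int G mult \<or> (\<forall>x\<in>G. finite_order mult e x))
       \<and> (iso_to_int G mult \<longleftrightarrow>
            ((\<forall>C\<in>nbhd_classes G mult e. card C = 2 \<or> card C = 3)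
             \<and> countable {C\<in>nbhd_classes G mult e. card C = 2}
             \<and> infinite {C\<in>nbhd_classes G mult e. card C = 2}
             \<and> (\<exists>!C. C \<in> nbhd_classes G mult e \<and> card C = 3)))"
proof -
  interpret pal G mult e by (rule pal.intro) (rule assms(1))
  obtain x where xc: "x \<in> pg_center G mult e" and xe: "x \<noteq> e" using assms(2) by metis
  have A: "iso_to_int G mult \<or> (\<forall>x\<in>G. finite_order mult e x)" using inf_case xc xe by blast
  have B: "iso_to_int G mult \<longleftrightarrow>
            ((\<forall>C\<in>nbhd_classes G mult e. card C = 2 \<or> card C = 3)
             \<and> countable {C\<in>nbhd_classes G mult e. card C = 2}
             \<and> infinite {C\<in>nbhd_classes G mult e. card C = 2}
             \<and> (\<exists>!C. C \<in> nbhd_classes G mult e \<and> card C = 3))" (is "_ \<longleftrightarrow> ?R")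
  proof
    assume "iso_to_int G mult" then show ?R by (rule iso_classes)
  next
    assume R: ?R
    show "iso_to_int G mult"
    proof (rule ccontr)
      assume ni: "\<not> iso_to_int G mult"
      then have tor: "\<forall>y\<in>G. finite_order mult e y" using A by blast
      have "infinite (nbhd_classes G mult e)" using R finite_subset[of "{C\<in>nbhd_classes G mult e. card C = 2}"] by blast
      then have inf: "infinite G" unfolding nbhd_classes_def using finite_imageI by blast
      show False using torsion_false[OF xc xe tor inf] R by blast
    qed
  qed
  show ?thesis using A B by blast
qed

end
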